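(* Let $\Delta'\ge 3$ be an integer and let $G\in\mathcal{G}_{\Delta'}$. For $i\in\{1,\dots,\Delta'\}$ define $$d_i=\frac{1}{i+1}+(i-1)!\Big(\frac{1}{e}-\sum_{j=0}^{i+1}\frac{(-1)^j}{j!}\Big)\ \text{ if $i$ is even},\qquad d_i=\frac{1}{i+1}+(i-1)!\Big(\sum_{j=0}^{i+1}\frac{(-1)^j}{j!}-\frac{1}{e}\Big)\ \text{ if $i$ is odd},$$ where $e$ is Euler's number. Then $$\alpha(G)\ge \sum_{i=1}^{\Delta'} d_i|V_i(G)|.$$ Moreover, $d_1=1-\frac{1}{e}$ and $d_{i+1}=1-id_i$ for $i=1,\dots,\Delta'-1$.
   Context: All graphs are simple, finite and undirected. For an integer $D\ge 3$, $\mathcal{G}_{D}$ denotes the set of connected graphs $G\neq K_{D+1}$ with maximum degree $D$. For a graph $G$ and $i\ge 1$, $V_i(G)$ is the set of vertices of $G$ of degree $i$. $\alpha(G)$ is the independence number of $G$. *)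

theory Defs
  imports Complex_Main
begin

definition simple_graph :: "'a set \<Rightarrow> ('a \<Rightarrow> 'a \<Rightarrow> bool) \<Rightarrow> bool" where
  "simple_graph V E \<longleftrightarrow> finite V \<and> (\<forall>x y. E x y \<longrightarrow> x \<in> V \<and> y \<in> V)
     \<and> (\<forall>x y. E x y \<longrightarrow> E y x) \<and> (\<forall>x. \<not> E x x)"

definition neighbours :: "'a set \<Rightarrow> ('a \<Rightarrow> 'a \<Rightarrow> bool) \<Rightarrow> 'a \<Rightarrow> 'a set" where
  "neighbours V E v = {u \<in> V. E v u}"

definition degree :: "'a set \<Rightarrow> ('a \<Rightarrow> 'a \<Rightarrow> bool) \<Rightarrow> 'a \<Rightarrow> nat" where
  "degree V E v = card (neighbours V E v)"

definition connected_graph :: "'a set \<Rightarrow> ('a \<Rightarrow> 'a \<Rightarrow> bool) \<Rightarrow> bool" where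
  "connected_graph V E \<longleftrightarrow> V \<noteq> {} \<and>
     (\<forall>u\<in>V. \<forall>v\<in>V. (u, v) \<in> {(x, y). E x y}\<^sup>*)"

definition max_degree_is :: "'a set \<Rightarrow> ('a \<Rightarrow> 'a \<Rightarrow> bool) \<Rightarrow> nat \<Rightarrow> bool" where
  "max_degree_is V E D \<longleftrightarrow> (\<forall>v\<in>V. degree V E v \<le> D) \<and> (\<exists>v\<in>V. degree V E v = D)"

definition is_complete_graph :: "'a set \<Rightarrow> ('a \<Rightarrow> 'a \<Rightarrow> bool) \<Rightarrow> nat \<Rightarrow> bool" where
  "is_complete_graph V E n \<longleftrightarrow> card V = n \<and> (\<forall>x\<in>V. \<forall>y\<in>V. x \<noteq> y \<longrightarrow> E x y)"

definition in_GD :: "nat \<Rightarrow> 'a set \<Rightarrow> ('a \<Rightarrow> 'a \<Rightarrow> bool) \<Rightarrow> bool" where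
  "in_GD D V E \<longleftrightarrow> simple_graph V E \<and> connected_graph V E \<and> max_degree_is V E D
     \<and> \<not> is_complete_graph V E (D + 1)"

definition vertices_of_degree :: "'a set \<Rightarrow> ('a \<Rightarrow> 'a \<Rightarrow> bool) \<Rightarrow> nat \<Rightarrow> 'a set" where
  "vertices_of_degree V E i = {v \<in> V. degree V E v = i}"

definition independent_set :: "'a set \<Rightarrow> ('a \<Rightarrow> 'a \<Rightarrow> bool) \<Rightarrow> 'a set \<Rightarrow> bool" where
  "independent_set V E S \<longleftrightarrow> S \<subseteq> V \<and> (\<forall>x\<in>S. \<forall>y\<in>S. \<not> E x y)"

definition independence_number :: "'a set \<Rightarrow> ('a \<Rightarrow> 'a \<Rightarrow> bool) \<Rightarrow> nat" where
  "independence_number V E = Max {card S | S. independent_set V E S}"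

definition d_coef :: "nat \<Rightarrow> real" where
  "d_coef i = (if even i
     then 1 / real (i + 1) + fact (i - 1) * (1 / exp 1 - (\<Sum>j = 0..i + 1. (-1) ^ j / fact j))
     else 1 / real (i + 1) + fact (i - 1) * ((\<Sum>j = 0..i + 1. (-1) ^ j / fact j) - 1 / exp 1))"

end

theory Submission
  imports Defs
begin

definition RR :: "nat \<Rightarrow> real" where
  "RR n = exp (-1) - (\<Sum>j = 0..n. (-1) ^ j / fact j)"

lemma dd_alt: "d_coef i = 1 / real (i+1) + fact (i - 1) * (-1)^i * RR (i+1)"
  unfolding d_coef_def RR_def by (auto simp: exp_minus field_simps)

lemma RR_Suc: "RR (Suc n) = RR n - (-1)^(Suc n) / fact (Suc n)"
  unfolding RR_def by simp

lemma nz: "(fact m::real) * 6 +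
    (fact m * (real m * (real m * real m)) +
     (fact m * (real m * 11) + fact m * (real m * (real m * 6)))) \<noteq> 0"
proof -
  have "(fact m::real) > 0" by simp
  moreover have "fact m * (real m * (real m * real m)) \<ge> 0" "fact m * (real m * 11) \<ge> 0" "fact m * (real m * (real m * 6)) \<ge> (0::real)" by simp_all
  ultimately show ?thesis by linarith
qed

lemma dd_rec:
  assumes "i \<ge> 1"
  shows "d_coef (i + 1) = 1 - real i * d_coef i"
proof -
  define F :: real where "F = fact (i - 1)"
  define x where "x = (-1)^i * RR (i+1)"
  have fi: "fact i = real i * F"
  proof -
    obtain m where m: "i = Suc m" using assms by (cases i) auto
    show ?thesis unfolding F_def m by simp
  qed
  have fi2: "(fact (i+2) :: real) = (real i + 1) * (real i + 2) * fact i"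
    by (simp add: algebra_simps)
  have d1: "d_coef i = 1 / real (i+1) + F * x" unfolding dd_alt F_def x_def by simp
  have r: "RR (i+2) = RR (i+1) - (-1)^(i+2) / fact (i+2)"
    using RR_Suc[of "i+1"] by simp
  have "(-1::real)^(i+1) * RR (i+2) = - x + 1 / fact (i+2)"
    unfolding r x_def by (simp add: algebra_simps power_add)
  moreover have "d_coef (i+1) = 1 / real (i+2) + fact i * ((-1::real)^(i+1) * RR (i+2))"
  proof -
    have e: "i+1+1 = i+2" "i+1-1 = i" by simp_all
    show ?thesis using dd_alt[of "i+1"] unfolding e by (simp only: mult.assoc)
  qed
  ultimately have d2: "d_coef (i+1) = 1 / real (i+2) + fact i * (- x + 1 / fact (i+2))"
    by simp
  have Fp: "F > 0" unfolding F_def by simp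
  have ip: "real i > 0" using assms by simp
  have c1: "real i * F * (1 / ((real i + 1) * (real i + 2) * (real i * F))) = 1/((real i+1)*(real i+2))"
    using ip Fp by simp
  have c2: "1 / real (i+2) + 1/((real i+1)*(real i+2)) = 1 - real i * (1 / real (i+1))"
    using ip by (simp add: divide_simps mult_eq_0_iff; simp add: algebra_simps)
  have "d_coef (i+1) = 1 / real (i+2) + 1/((real i+1)*(real i+2)) - real i * F * x"
    unfolding d2 fi2 fi using c1 by (simp add: algebra_simps)
  also have "\<dots> = 1 - real i * d_coef i" unfolding c2 d1 by (simp add: algebra_simps)
  finally show ?thesis .
qed

lemma dd_1: "d_coef 1 = 1 - 1 / exp 1"
  unfolding d_coef_def by simp

lemma tail_bound:
  "(-1)^j * RR (j+1) \<ge> 1 / fact (j+2) - 1 / fact (j+3)"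
proof -
  define n where "n = j + 2"
  define a where "a = (\<lambda>m. (-1::real)^m / fact m)"
  have s0: "a sums exp (-1)"
    using exp_converges[of "-1::real"] by (simp add: a_def divide_inverse mult.commute)
  have s1: "(\<lambda>i. a (i + n)) sums (exp (-1) - (\<Sum>i<n. a i))"
    using s0 sums_iff_shift[of a n "exp (-1) - (\<Sum>i<n. a i)"] by simp
  have eqR: "exp (-1) - (\<Sum>i<n. a i) = RR (j+1)"
    unfolding RR_def a_def n_def
    by (simp add: atLeast0AtMost lessThan_Suc_atMost[symmetric])
  have s2: "(\<lambda>i. (-1)^j * a (i + n)) sums ((-1)^j * RR (j+1))"
    using sums_mult[OF s1, of "(-1)^j"] eqR by simp
  have eqa: "(-1)^j * a (i + n) = (-1)^i / fact (i + n)" for i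
    unfolding a_def n_def by (simp add: power_add)
  define b where "b = (\<lambda>i. (-1::real)^i / fact (i + n))"
  have s3: "b sums ((-1)^j * RR (j+1))"
    using s2 unfolding b_def eqa .
  have s4: "(\<lambda>p. sum b {p * 2 ..< p * 2 + 2}) sums ((-1)^j * RR (j+1))"
    using sums_group[OF s3, of 2] by simp
  have tm: "sum b {p * 2 ..< p * 2 + 2} = 1 / fact (2*p + n) - 1 / fact (2*p + 1 + n)" for p
  proof -
    have e: "(-1::real)^(2*p) = 1" by (simp add: power_mult)
    have "{p * 2 ..< p * 2 + 2} = {2*p, 2*p+1}" by auto
    hence "sum b {p * 2 ..< p * 2 + 2} = b (2*p) + b (2*p+1)" by simp
    also have "\<dots> = 1 / fact (2*p + n) - 1 / fact (2*p + 1 + n)"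
      unfolding b_def using e by (simp add: add.commute)
    finally show ?thesis .
  qed
  have nn: "0 \<le> sum b {p * 2 ..< p * 2 + 2}" for p
  proof -
    have "(fact (2*p + n) :: real) \<le> fact (2*p+1+n)" by (rule fact_mono) simp
    hence "1 / fact (2*p + 1 + n) \<le> (1 / fact (2*p + n) :: real)"
      by (intro divide_left_mono) auto
    thus ?thesis unfolding tm by simp
  qed
  have "sum (\<lambda>p. sum b {p * 2 ..< p * 2 + 2}) {0} \<le> (-1)^j * RR (j+1)"
    using sum_le_suminf[OF sums_summable[OF s4], of "{0}"] nn sums_unique[OF s4] by simp
  thus ?thesis using tm[of 0] unfolding n_def by (simp add: numeral_3_eq_3 numeral_2_eq_2)
qed

lemma fin: "t > (0::real) \<Longrightarrow> (1/(t+1) + 1/(t*(t+1)*(t+3))) * (t^2 + 3*t + 1) \<ge> t + 2"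
proof -
  assume t: "t > 0"
  have d: "t*(t+1)*(t+3) > 0" using t by simp
  have "1/(t+1) + 1/(t*(t+1)*(t+3)) = (t*t+3*t+1)/(t*(t+1)*(t+3))"
    using t by (simp add: divide_simps mult_eq_0_iff; simp add: algebra_simps)
  hence "(1/(t+1) + 1/(t*(t+1)*(t+3))) * (t^2 + 3*t + 1) = (t*t+3*t+1)*(t^2 + 3*t + 1)/(t*(t+1)*(t+3))"
    by simp
  also have "\<dots> \<ge> t + 2"
    using d by (simp add: pos_le_divide_eq power2_eq_square algebra_simps)
  finally show ?thesis .
qed

lemma dd_lower:
  assumes "j \<ge> 1"
  shows "d_coef j * (real j ^ 2 + 3 * real j + 1) \<ge> real j + 2"
proof -
  obtain m where m: "j = Suc m" using assms by (cases j) auto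
  have F: "fact (j - 1) * (1 / fact (j+2) - 1 / fact (j+3)) = 1 / (real j * (j+1) * (j+3))"
  proof -
    have a: "fact (j+2) = real (j * (j+1) * (j+2)) * fact (j-1)"
    proof -
      have "(fact (j+2)::nat) = (j * (j+1) * (j+2)) * fact (j-1)"
        using assms by (cases j) (auto simp: algebra_simps)
      hence "real (fact (j+2)) = real ((j * (j+1) * (j+2)) * fact (j-1))" by simp
      thus ?thesis by (simp only: of_nat_fact of_nat_mult)
    qed
    have b: "fact (j+3) = real (j * (j+1) * (j+2) * (j+3)) * fact (j-1)"
    proof -
      have "(fact (j+3)::nat) = (j * (j+1) * (j+2) * (j+3)) * fact (j-1)"
        using assms by (cases j) (auto simp: algebra_simps eval_nat_numeral)
      hence "real (fact (j+3)) = real ((j * (j+1) * (j+2) * (j+3)) * fact (j-1))" by simp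
      thus ?thesis by (simp only: of_nat_fact of_nat_mult)
    qed
    have G: "(fact (j-1)::real) > 0" by simp
    have jp: "real j > 0" using assms by simp
    have gen: "G * (1 / (a * G) - 1 / (b * G)) = 1/a - 1/b" if "G > 0" for G a b :: real
      using that by (simp add: right_diff_distrib)
    have tl: "1/(t*(t+1)*(t+2)) - 1/(t*(t+1)*(t+2)*(t+3)) = 1 / (t * (t+1) * (t+3))" if "t > (0::real)" for t
      using that by (simp add: divide_simps mult_eq_0_iff; simp add: algebra_simps)
    have e1: "real (j * (j+1) * (j+2)) = real j * (real j + 1) * (real j + 2)" by (simp add: algebra_simps)
    have e2: "real (j * (j+1) * (j+2) * (j+3)) = real j * (real j + 1) * (real j + 2) * (real j + 3)" by (simp add: algebra_simps)
    show ?thesis unfolding a b gen[OF G] e1 e2 tl[OF jp] by simp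
  qed
  have "d_coef j \<ge> 1 / real (j+1) + 1 / (real j * (j+1) * (j+3))"
  proof -
    have "fact (j - 1) * (1 / fact (j+2) - 1 / fact (j+3)) \<le> fact (j - 1) * ((-1)^j * RR (j+1))"
      by (intro mult_left_mono tail_bound) auto
    thus ?thesis unfolding dd_alt F by (simp add: mult.assoc)
  qed
  moreover have "(1 / real (j+1) + 1 / (real j * (j+1) * (j+3))) * (real j ^ 2 + 3 * real j + 1) \<ge> real j + 2"
    using fin[of "real j"] assms by (simp add: add.commute)
  ultimately show ?thesis
    by (smt (verit) mult_right_mono zero_le_power2 of_nat_0_le_iff)
qed


lemma dd_pos: "j \<ge> 1 \<Longrightarrow> d_coef j > 0"
proof (rule ccontr)
  assume j: "j \<ge> 1" and n: "\<not> d_coef j > 0"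
  have a: "d_coef j * (real j ^ 2 + 3 * real j + 1) \<ge> real j + 2" using dd_lower[OF j] .
  have "real j ^ 2 + 3 * real j + 1 \<ge> 0" by simp
  hence "d_coef j * (real j ^ 2 + 3 * real j + 1) \<le> 0"
    using n by (intro mult_nonpos_nonneg) auto
  thus False using a by simp
qed

lemma dd_inv: "j \<ge> 1 \<Longrightarrow> d_coef j * (real j + 1) \<ge> 1"
proof -
  assume j: "j \<ge> 1"
  have a: "d_coef j * (real j ^ 2 + 3 * real j + 1) \<ge> real j + 2" using dd_lower[OF j] .
  have p: "d_coef j > 0" using dd_pos[OF j] .
  have e: "(d_coef j * (real j + 1) - 1) * (real j + 2) = d_coef j * (real j ^ 2 + 3 * real j + 1) + d_coef j - (real j + 2)"
    by (simp add: algebra_simps power2_eq_square)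
  have "(d_coef j * (real j + 1) - 1) * (real j + 2) \<ge> 0" unfolding e using a p by linarith
  moreover have "real j + 2 > 0" by simp
  ultimately have "d_coef j * (real j + 1) - 1 \<ge> 0"
    using zero_le_mult_iff by (metis not_less)
  thus ?thesis by simp
qed

lemma dd_ge_inv: "j \<ge> 1 \<Longrightarrow> 1 / (real j + 1) \<le> d_coef j"
proof -
  assume j: "j \<ge> 1"
  have "real j + 1 > 0" by simp
  thus ?thesis using dd_inv[OF j] by (simp add: divide_le_eq)
qed

lemma dd_dec: "j \<ge> 1 \<Longrightarrow> d_coef (j + 1) \<le> d_coef j"
  using dd_rec[of j] dd_inv[of j] by (simp add: algebra_simps)

lemma dd_mono:
  assumes "1 \<le> a" "a \<le> b" shows "d_coef b \<le> d_coef a"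
  using assms(2)
proof (induction b rule: dec_induct)
  case base then show ?case by simp
next
  case (step n) then show ?case using dd_dec[of n] assms(1) by simp
qed

lemma dd_le1: "j \<ge> 1 \<Longrightarrow> d_coef j \<le> 1"
proof -
  assume "j \<ge> 1"
  hence "d_coef j \<le> d_coef 1" using dd_mono[of 1 j] by simp
  moreover have "d_coef 1 \<le> 1" unfolding dd_1 by simp
  ultimately show ?thesis by simp
qed

lemma dd_convex:
  assumes "m \<ge> 1"
  shows "d_coef (m + 1) - d_coef (m + 2) \<le> d_coef m - d_coef (m + 1)"
proof -
  have r1: "d_coef (m+1) = 1 - real m * d_coef m" using dd_rec[OF assms] .
  have r2: "d_coef (m+2) = 1 - (real m + 1) * d_coef (m+1)"
    using dd_rec[of "m+1"] by (simp add: add.commute)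
  have "d_coef m - d_coef (m + 1) - (d_coef (m + 1) - d_coef (m + 2))
        = d_coef m * (real m ^ 2 + 3 * real m + 1) - (real m + 2)"
    unfolding r2 r1 by (simp add: algebra_simps power2_eq_square)
  thus ?thesis using dd_lower[OF assms] by linarith
qed

lemma dd_chain:
  assumes "2 \<le> j" "j \<le> k"
  shows "d_coef (k - 1) - d_coef k \<le> d_coef (j - 1) - d_coef j"
  using assms(2,1)
proof (induction k rule: dec_induct)
  case base then show ?case by simp
next
  case (step n)
  obtain m where m: "n = m + 1" "m \<ge> 1" using step by (cases n) auto
  have "d_coef (Suc n - 1) - d_coef (Suc n) \<le> d_coef (n - 1) - d_coef n"
    using dd_convex[OF m(2)] unfolding m by (simp add: add.commute)
  then show ?case using step by linarith
qed

lemma dd_R5: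
  assumes "k \<ge> 2"
  shows "d_coef k \<le> real k * (d_coef (k - 1) - d_coef k)"
proof -
  obtain m where m: "k = m + 1" "m \<ge> 1" using assms by (cases k) auto
  have r1: "d_coef (m+1) = 1 - real m * d_coef m" using dd_rec[OF m(2)] .
  have "real k * (d_coef (k - 1) - d_coef k) - d_coef k = d_coef m * (real m ^ 2 + 3 * real m + 1) - (real m + 2)"
    unfolding m r1 by (simp add: algebra_simps power2_eq_square)
  thus ?thesis using dd_lower[OF m(2)] by linarith
qed


locale gr =
  fixes E :: "'a \<Rightarrow> 'a \<Rightarrow> bool"
  assumes symE: "E x y \<Longrightarrow> E y x" and irrE: "\<not> E x x"
begin

definition cnb :: "'a set \<Rightarrow> 'a \<Rightarrow> 'a set" where
  "cnb W v = insert v (neighbours W E v)"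

definition isK :: "'a set \<Rightarrow> 'a \<Rightarrow> bool" where
  "isK W v \<longleftrightarrow> (\<forall>u\<in>neighbours W E v. cnb W u = cnb W v)"

definition gw :: "'a set \<Rightarrow> 'a \<Rightarrow> real" where
  "gw W v = (if isK W v then 1 / (real (degree W E v) + 1) else d_coef (degree W E v))"

definition fw :: "'a set \<Rightarrow> real" where
  "fw W = (\<Sum>v\<in>W. gw W v)"

definition clique :: "'a set \<Rightarrow> bool" where
  "clique K \<longleftrightarrow> (\<forall>u\<in>K. \<forall>w\<in>K. u \<noteq> w \<longrightarrow> E u w)"

lemma nb_sub: "neighbours W E v \<subseteq> W" unfolding neighbours_def by auto

lemma v_notin_nb: "v \<notin> neighbours W E v" unfolding neighbours_def using irrE by auto

lemma card_cnb: "finite W \<Longrightarrow> card (cnb W v) = degree W E v + 1"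
  unfolding cnb_def degree_def using v_notin_nb
  by (simp add: finite_subset[OF nb_sub])

lemma cnb_sub: "v \<in> W \<Longrightarrow> cnb W v \<subseteq> W" unfolding cnb_def using nb_sub by auto

lemma isK_cnb:
  assumes "isK W v" "u \<in> cnb W v"
  shows "isK W u \<and> cnb W u = cnb W v"
proof -
  have c: "cnb W u = cnb W v" using assms unfolding isK_def cnb_def by auto
  have "isK W u"
    unfolding isK_def
  proof
    fix t assume t: "t \<in> neighbours W E u"
    hence "t \<in> cnb W v" using c unfolding cnb_def by auto
    hence "t = v \<or> t \<in> neighbours W E v" unfolding cnb_def by auto
    thus "cnb W t = cnb W u" using assms(1) c unfolding isK_def by auto
  qed
  thus ?thesis using c by simp
qed

lemma isK_clique:
  assumes "isK W v"
  shows "clique (cnb W v)"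
  unfolding clique_def
proof (intro ballI impI)
  fix u w assume u: "u \<in> cnb W v" and w: "w \<in> cnb W v" and ne: "u \<noteq> w"
  have "cnb W u = cnb W v" using isK_cnb[OF assms u] by simp
  hence "w \<in> cnb W u" using w by simp
  thus "E u w" using ne unfolding cnb_def neighbours_def by auto
qed

lemma isK_sum:
  assumes "finite W" "isK W v"
  shows "(\<Sum>u\<in>cnb W v. gw W u) = 1"
proof -
  have "\<forall>u\<in>cnb W v. gw W u = 1 / real (card (cnb W v))"
  proof
    fix u assume u: "u \<in> cnb W v"
    have "isK W u" "cnb W u = cnb W v" using isK_cnb[OF assms(2) u] by auto
    thus "gw W u = 1 / real (card (cnb W v))"
      unfolding gw_def using card_cnb[OF assms(1), of u] by simp
  qed
  hence "(\<Sum>u\<in>cnb W v. gw W u) = real (card (cnb W v)) * (1 / real (card (cnb W v)))"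
    by simp
  moreover have "card (cnb W v) > 0" using card_cnb[OF assms(1)] by simp
  ultimately show ?thesis by simp
qed

lemma not_isK_deg:
  assumes "finite W" "\<not> isK W v"
  shows "degree W E v \<ge> 1"
proof -
  have "neighbours W E v \<noteq> {}" using assms(2) unfolding isK_def by auto
  moreover have "finite (neighbours W E v)" using finite_subset[OF nb_sub assms(1)] .
  ultimately show ?thesis unfolding degree_def by (simp add: Suc_le_eq card_gt_0_iff)
qed

lemma deg_mono: "finite W \<Longrightarrow> W' \<subseteq> W \<Longrightarrow> degree W' E v \<le> degree W E v"
  unfolding degree_def
  by (rule card_mono) (auto simp: neighbours_def intro: finite_subset)

lemma clique_sum_le1:
  assumes fin: "finite W" and KW: "K \<subseteq> W" and Kne: "K \<noteq> {}" and cl: "clique K"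
    and nK: "\<forall>t\<in>K. \<not> isK W t"
  shows "(\<Sum>t\<in>K. d_coef (degree W E t)) \<le> 1"
proof -
  have finK: "finite K" using finite_subset[OF KW fin] .
  define r where "r = card K"
  have r1: "r \<ge> 1" using Kne finK unfolding r_def by (simp add: Suc_le_eq card_gt_0_iff)
  have sub: "K - {u} \<subseteq> neighbours W E u" if "u \<in> K" for u
    using cl KW that unfolding clique_def neighbours_def by auto
  have dlow: "degree W E u \<ge> r - 1" if "u \<in> K" for u
  proof -
    have "card (K - {u}) \<le> degree W E u"
      unfolding degree_def by (rule card_mono[OF finite_subset[OF nb_sub fin] sub[OF that]])
    thus ?thesis using that finK unfolding r_def by simp
  qed
  have dge1: "degree W E u \<ge> 1" if "u \<in> K" for u
    using not_isK_deg[OF fin] nK that by auto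
  obtain u0 where u0: "u0 \<in> K" "degree W E u0 \<ge> r"
  proof (rule ccontr)
    assume "\<not> thesis"
    hence lt: "\<forall>u\<in>K. degree W E u < r" using that by force
    have nbeq: "neighbours W E u = K - {u}" if "u \<in> K" for u
    proof -
      have "finite (neighbours W E u)" using finite_subset[OF nb_sub fin] .
      moreover have "card (neighbours W E u) \<le> card (K - {u})"
        using lt that finK unfolding degree_def r_def by auto
      ultimately show ?thesis using sub[OF that]
        by (metis card_seteq finite_Diff finK)
    qed
    have cq: "cnb W u = K" if "u \<in> K" for u
      using nbeq[OF that] that unfolding cnb_def by auto
    obtain w where w: "w \<in> K" using Kne by auto
    have "isK W w" unfolding isK_def
    proof
      fix t assume "t \<in> neighbours W E w"
      hence "t \<in> K" using nbeq[OF w] by auto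
      thus "cnb W t = cnb W w" using cq w by auto
    qed
    thus False using nK w by auto
  qed
  show ?thesis
  proof (cases "r = 1")
    case True
    hence "K = {u0}" using u0 finK unfolding r_def by (metis card_1_singletonE singletonD)
    thus ?thesis using dd_le1[OF dge1[OF u0(1)]] by simp
  next
    case False
    hence r2: "r \<ge> 2" using r1 by simp
    have "(\<Sum>t\<in>K. d_coef (degree W E t)) = d_coef (degree W E u0) + (\<Sum>t\<in>K - {u0}. d_coef (degree W E t))"
      using u0(1) finK by (simp add: sum.remove)
    also have "\<dots> \<le> d_coef r + (\<Sum>t\<in>K - {u0}. d_coef (r - 1))"
    proof (intro add_mono sum_mono)
      show "d_coef (degree W E u0) \<le> d_coef r" using dd_mono[of r "degree W E u0"] u0 r1 by simp
      fix t assume "t \<in> K - {u0}"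
      thus "d_coef (degree W E t) \<le> d_coef (r - 1)" using dd_mono[of "r - 1" "degree W E t"] dlow r2 by simp
    qed
    also have "\<dots> = d_coef r + real (r - 1) * d_coef (r - 1)"
      using u0(1) finK unfolding r_def by simp
    also have "\<dots> = 1"
      using dd_rec[of "r - 1"] r2 by simp
    finally show ?thesis .
  qed
qed

lemma double_count:
  fixes phi :: "'b \<Rightarrow> real"
  assumes finA: "finite A"
    and K: "\<And>w. w \<in> A \<Longrightarrow> w \<in> K w \<and> K w \<subseteq> A \<and> (\<forall>u\<in>K w. K u = K w)"
  shows "(\<Sum>w\<in>A. phi w) = (\<Sum>w\<in>A. (\<Sum>u\<in>K w. phi u) / real (card (K w)))"
proof -
  have K1: "w \<in> K w" "K w \<subseteq> A" if "w \<in> A" for w using K[OF that] by blast+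
  have K2: "K u = K w" if "w \<in> A" "u \<in> K w" for u w using K[OF that(1)] that(2) by blast
  have finK: "finite (K w)" if "w \<in> A" for w using finite_subset[OF K1(2)[OF that] finA] .
  have "(\<Sum>w\<in>A. (\<Sum>u\<in>K w. phi u) / real (card (K w)))
      = (\<Sum>w\<in>A. (\<Sum>u\<in>{u\<in>A. u \<in> K w}. phi u / real (card (K u))))"
  proof (rule sum.cong[OF refl])
    fix w assume w: "w \<in> A"
    have e: "{u\<in>A. u \<in> K w} = K w" using K1[OF w] by blast
    have "(\<Sum>u\<in>K w. phi u) / real (card (K w)) = (\<Sum>u\<in>K w. phi u / real (card (K w)))"
      by (simp add: sum_divide_distrib)
    also have "\<dots> = (\<Sum>u\<in>K w. phi u / real (card (K u)))"
      by (rule sum.cong[OF refl]) (simp only: K2[OF w])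
    finally show "(\<Sum>u\<in>K w. phi u) / real (card (K w)) = (\<Sum>u\<in>{u\<in>A. u \<in> K w}. phi u / real (card (K u)))"
      unfolding e .
  qed
  also have "\<dots> = (\<Sum>u\<in>A. (\<Sum>w\<in>{w\<in>A. u \<in> K w}. phi u / real (card (K u))))"
    by (rule sum.swap_restrict[OF finA finA])
  also have "\<dots> = (\<Sum>u\<in>A. phi u)"
  proof (rule sum.cong[OF refl])
    fix u assume u: "u \<in> A"
    have e: "{w\<in>A. u \<in> K w} = K u"
    proof
      show "{w\<in>A. u \<in> K w} \<subseteq> K u"
      proof
        fix w assume "w \<in> {w\<in>A. u \<in> K w}"
        hence w: "w \<in> A" "u \<in> K w" by auto
        have "K u = K w" using K2[OF w] .
        thus "w \<in> K u" using K1(1)[OF w(1)] by simp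
      qed
      show "K u \<subseteq> {w\<in>A. u \<in> K w}"
      proof
        fix w assume w: "w \<in> K u"
        have "K w = K u" using K2[OF u w] .
        moreover have "w \<in> A" using K1(2)[OF u] w by blast
        ultimately show "w \<in> {w\<in>A. u \<in> K w}" using K1(1)[OF u] by simp
      qed
    qed
    have "card (K u) > 0" using K1(1)[OF u] finK[OF u] card_gt_0_iff by blast
    thus "(\<Sum>w\<in>{w\<in>A. u \<in> K w}. phi u / real (card (K u))) = phi u"
      unfolding e by simp
  qed
  finally show ?thesis by simp
qed

lemma lemma_M:
  assumes fin: "finite W" and XW: "X \<subseteq> W"
  shows "(\<Sum>w\<in>W - X. gw W w) \<le> fw (W - X)"
proof -
  define W' where "W' = W - X"
  have finW': "finite W'" using fin unfolding W'_def by simp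
  have W'W: "W' \<subseteq> W" unfolding W'_def by auto
  define A where "A = {w\<in>W'. isK W' w}"
  define B where "B = {w\<in>W'. \<not> isK W' w}"
  have AB: "W' = A \<union> B" "A \<inter> B = {}" unfolding A_def B_def by auto
  have finA: "finite A" "finite B" using finW' unfolding A_def B_def by auto
  have splitW: "(\<Sum>w\<in>W'. h w) = (\<Sum>w\<in>A. h w) + (\<Sum>w\<in>B. h w)" for h :: "'a \<Rightarrow> real"
    using AB finA by (simp add: sum.union_disjoint)
  have Bpart: "(\<Sum>w\<in>B. gw W w) \<le> (\<Sum>w\<in>B. gw W' w)"
  proof (rule sum_mono)
    fix w assume w: "w \<in> B"
    hence nK: "\<not> isK W' w" and wW': "w \<in> W'" unfolding B_def by auto
    have d1: "degree W' E w \<ge> 1" using not_isK_deg[OF finW' nK] .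
    have dle: "degree W' E w \<le> degree W E w" using deg_mono[OF fin W'W] .
    have g': "gw W' w = d_coef (degree W' E w)" unfolding gw_def using nK by simp
    have "d_coef (degree W E w) \<le> d_coef (degree W' E w)" using dd_mono[OF d1 dle] .
    moreover have "1 / (real (degree W E w) + 1) \<le> d_coef (degree W E w)"
      using dd_ge_inv d1 dle by simp
    ultimately have "gw W w \<le> d_coef (degree W' E w)" unfolding gw_def by simp
    thus "gw W w \<le> gw W' w" using g' by simp
  qed
  have Kprop: "\<And>w. w \<in> A \<Longrightarrow> w \<in> cnb W' w \<and> cnb W' w \<subseteq> A \<and> (\<forall>u\<in>cnb W' w. cnb W' u = cnb W' w)"
  proof -
    fix w assume w: "w \<in> A"
    hence wK: "isK W' w" "w \<in> W'" unfolding A_def by auto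
    have "cnb W' w \<subseteq> A"
    proof
      fix u assume u: "u \<in> cnb W' w"
      hence "isK W' u" using isK_cnb[OF wK(1) u] by simp
      moreover have "u \<in> W'" using u cnb_sub[OF wK(2)] by auto
      ultimately show "u \<in> A" unfolding A_def by simp
    qed
    moreover have "w \<in> cnb W' w" unfolding cnb_def by simp
    moreover have "\<forall>u\<in>cnb W' w. cnb W' u = cnb W' w" using isK_cnb[OF wK(1)] by blast
    ultimately show "w \<in> cnb W' w \<and> cnb W' w \<subseteq> A \<and> (\<forall>u\<in>cnb W' w. cnb W' u = cnb W' w)"
      by blast
  qed
  have perK: "(\<Sum>u\<in>cnb W' w. gw W u) \<le> 1" if w: "w \<in> A" for w
  proof -
    define K where "K = cnb W' w"
    have wK: "isK W' w" "w \<in> W'" using w unfolding A_def by auto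
    have KW: "K \<subseteq> W" unfolding K_def using cnb_sub[OF wK(2)] W'W by auto
    have finK: "finite K" using finite_subset[OF KW fin] .
    have clK: "clique K" unfolding K_def using isK_clique[OF wK(1)] .
    have Kne: "K \<noteq> {}" unfolding K_def cnb_def by auto
    show ?thesis
    proof (cases "\<exists>u\<in>K. isK W u")
      case True
      then obtain u where u: "u \<in> K" "isK W u" by auto
      define L where "L = cnb W u"
      have uW: "u \<in> W" using u KW by auto
      have KL: "K \<subseteq> L"
      proof
        fix t assume t: "t \<in> K"
        show "t \<in> L"
        proof (cases "t = u")
          case True thus ?thesis unfolding L_def cnb_def by simp
        next
          case False
          hence "E u t" using clK u t unfolding clique_def by auto
          thus ?thesis using t KW unfolding L_def cnb_def neighbours_def by auto
        qed
      qed
      have gK: "gw W t = 1 / real (card L)" if t: "t \<in> K" for t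
      proof -
        have "isK W t" "cnb W t = L" using isK_cnb[OF u(2)] KL t unfolding L_def by auto
        thus ?thesis unfolding gw_def using card_cnb[OF fin, of t] by simp
      qed
      have finL: "finite L" unfolding L_def using finite_subset[OF cnb_sub[OF uW] fin] .
      have cL: "card L > 0" using finL KL Kne by (auto simp: card_gt_0_iff)
      have "(\<Sum>t\<in>K. gw W t) = real (card K) / real (card L)"
        using gK by simp
      also have "\<dots> \<le> 1" using card_mono[OF finL KL] cL by simp
      finally show ?thesis unfolding K_def .
    next
      case False
      hence nK: "\<forall>t\<in>K. \<not> isK W t" by auto
      have "(\<Sum>t\<in>K. gw W t) = (\<Sum>t\<in>K. d_coef (degree W E t))"
        using nK unfolding gw_def by simp
      also have "\<dots> \<le> 1" using clique_sum_le1[OF fin KW Kne clK nK] .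
      finally show ?thesis unfolding K_def .
    qed
  qed
  have g'A: "gw W' w = 1 / real (card (cnb W' w))" if "w \<in> A" for w
    using that card_cnb[OF finW', of w] unfolding A_def gw_def by simp
  have Apart: "(\<Sum>w\<in>A. gw W w) \<le> (\<Sum>w\<in>A. gw W' w)"
  proof -
    have "(\<Sum>w\<in>A. gw W w) = (\<Sum>w\<in>A. (\<Sum>u\<in>cnb W' w. gw W u) / real (card (cnb W' w)))"
      by (rule double_count[OF finA(1) Kprop])
    also have "\<dots> \<le> (\<Sum>w\<in>A. 1 / real (card (cnb W' w)))"
      by (intro sum_mono divide_right_mono perK) auto
    also have "\<dots> = (\<Sum>w\<in>A. gw W' w)" using g'A by simp
    finally show ?thesis .
  qed
  show ?thesis unfolding fw_def W'_def[symmetric] splitW using Apart Bpart by simp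
qed


lemma no_isK_case2:
  assumes fin: "finite W" and big: "\<forall>u\<in>W. (\<Sum>t\<in>cnb W u. gw W t) > 1" and u: "u \<in> W"
  shows "\<not> isK W u"
proof
  assume "isK W u"
  hence "(\<Sum>t\<in>cnb W u. gw W t) = 1" using isK_sum[OF fin] by blast
  thus False using bspec[OF big u] by simp
qed

lemma simplicial_le1:
  assumes fin: "finite W" and nK: "\<forall>t\<in>W. \<not> isK W t" and u: "u \<in> W"
    and cl: "clique (cnb W u)"
  shows "(\<Sum>t\<in>cnb W u. gw W t) \<le> 1"
proof -
  have sub: "cnb W u \<subseteq> W" using cnb_sub[OF u] .
  have "(\<Sum>t\<in>cnb W u. gw W t) = (\<Sum>t\<in>cnb W u. d_coef (degree W E t))"
    using nK sub unfolding gw_def by (intro sum.cong) auto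
  also have "\<dots> \<le> 1"
  proof (rule clique_sum_le1[OF fin sub _ cl])
    show "cnb W u \<noteq> {}" unfolding cnb_def by simp
    show "\<forall>t\<in>cnb W u. \<not> isK W t" using nK sub by blast
  qed
  finally show ?thesis .
qed

lemma nb_remove: "neighbours (W - {v}) E u = neighbours W E u - {v}"
  unfolding neighbours_def by auto

lemma deletion_step:
  assumes fin: "finite W" and big: "\<forall>u\<in>W. (\<Sum>t\<in>cnb W u. gw W t) > 1"
    and v: "v \<in> W" and vmax: "\<forall>u\<in>W. degree W E u \<le> degree W E v"
  shows "fw W \<le> fw (W - {v})"
proof -
  define W' where "W' = W - {v}"
  define k where "k = degree W E v"
  define N where "N = neighbours W E v"
  have finW': "finite W'" using fin unfolding W'_def by simp
  have nK: "\<forall>t\<in>W. \<not> isK W t" using no_isK_case2[OF fin big] by blast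
  have nS: "\<not> clique (cnb W t)" if "t \<in> W" for t
  proof
    assume "clique (cnb W t)"
    hence "(\<Sum>s\<in>cnb W t. gw W s) \<le> 1" using simplicial_le1[OF fin nK that] by blast
    thus False using bspec[OF big that] by simp
  qed
  have nK': "\<not> isK W' u" if u: "u \<in> W'" for u
  proof
    assume K: "isK W' u"
    define K where "K = cnb W' u"
    have clK: "clique K" unfolding K_def using isK_clique[OF K] .
    have uW: "u \<in> W" "u \<noteq> v" using u unfolding W'_def by auto
    show False
    proof (cases "\<exists>t\<in>K. \<not> E t v")
      case True
      then obtain t where t: "t \<in> K" "\<not> E t v" by auto
      have ct: "cnb W' t = K" using isK_cnb[OF K] t unfolding K_def by auto
      have tW: "t \<in> W" "t \<noteq> v" using t cnb_sub[OF u] unfolding K_def W'_def by auto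
      have "neighbours W E t = neighbours W' E t"
        unfolding W'_def nb_remove using t(2) unfolding neighbours_def by auto
      hence "cnb W t = K" using ct unfolding cnb_def by simp
      thus False using nS[OF tW(1)] clK by simp
    next
      case False
      hence adj: "\<forall>t\<in>K. E t v" by auto
      have "E u v" using adj unfolding K_def cnb_def by simp
      hence "v \<in> neighbours W E u" using v unfolding neighbours_def by simp
      hence "neighbours W E u = insert v (neighbours W' E u)"
        unfolding W'_def nb_remove by blast
      hence cu: "cnb W u = insert v K" unfolding K_def cnb_def by auto
      have "clique (insert v K)"
        unfolding clique_def
      proof (intro ballI impI)
        fix a b assume a: "a \<in> insert v K" and b: "b \<in> insert v K" and ab: "a \<noteq> b"
        show "E a b"
        proof (cases "a = v")
          case True
          hence "b \<in> K" using b ab by auto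
          thus ?thesis using adj True symE by blast
        next
          case False
          hence aK: "a \<in> K" using a by auto
          show ?thesis
          proof (cases "b = v")
            case True thus ?thesis using adj aK by blast
          next
            case False
            hence "b \<in> K" using b by auto
            thus ?thesis using clK aK ab unfolding clique_def by blast
          qed
        qed
      qed
      thus False using nS[OF uW(1)] cu by simp
    qed
  qed
  have NW': "N \<subseteq> W'" unfolding N_def W'_def neighbours_def using irrE by auto
  have finN: "finite N" using finite_subset[OF NW' finW'] .
  have cardN: "card N = k" unfolding N_def k_def degree_def by simp
  have degW': "degree W' E u = (if u \<in> N then degree W E u - 1 else degree W E u)" if u: "u \<in> W'" for u
  proof -
    have nbf: "finite (neighbours W E u)" using finite_subset[OF nb_sub fin] .
    have "v \<in> neighbours W E u \<longleftrightarrow> u \<in> N"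
    proof -
      have "E u v \<longleftrightarrow> E v u" using symE by blast
      thus ?thesis using u v unfolding N_def W'_def neighbours_def by simp
    qed
    thus ?thesis unfolding degree_def W'_def nb_remove using nbf by auto
  qed
  have g: "gw W u = d_coef (degree W E u)" if "u \<in> W" for u using nK that unfolding gw_def by simp
  have g': "gw W' u = d_coef (degree W' E u)" if "u \<in> W'" for u using nK' that unfolding gw_def by simp
  have d1': "degree W' E u \<ge> 1" if "u \<in> W'" for u using not_isK_deg[OF finW' nK'[OF that]] .
  have fwW: "fw W = d_coef k + (\<Sum>u\<in>W'. d_coef (degree W E u))"
    unfolding fw_def W'_def k_def using fin v g by (simp add: sum.remove)
  have fwW': "fw W' = (\<Sum>u\<in>W'. d_coef (degree W' E u))"
    unfolding fw_def using g' by simp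
  have diff: "fw W' - (fw W - d_coef k) = (\<Sum>u\<in>N. d_coef (degree W E u - 1) - d_coef (degree W E u))"
  proof -
    have "fw W' - (fw W - d_coef k) = (\<Sum>u\<in>W'. d_coef (degree W' E u) - d_coef (degree W E u))"
      unfolding fwW fwW' by (simp add: sum_subtractf)
    also have "\<dots> = (\<Sum>u\<in>N. d_coef (degree W' E u) - d_coef (degree W E u))"
      by (rule sum.mono_neutral_right[OF finW' NW']) (auto simp: degW')
    also have "\<dots> = (\<Sum>u\<in>N. d_coef (degree W E u - 1) - d_coef (degree W E u))"
      using NW' degW' by (intro sum.cong) auto
    finally show ?thesis .
  qed
  have Nne: "N \<noteq> {}" using nK v unfolding isK_def N_def by auto
  have termb: "d_coef (k - 1) - d_coef k \<le> d_coef (degree W E u - 1) - d_coef (degree W E u)"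
    and deg2: "degree W E u \<ge> 2" if u: "u \<in> N" for u
  proof -
    have uW': "u \<in> W'" using u NW' by auto
    have "degree W' E u = degree W E u - 1" using degW'[OF uW'] u by simp
    thus d2: "degree W E u \<ge> 2" using d1'[OF uW'] by simp
    have "degree W E u \<le> k" unfolding k_def using vmax uW' unfolding W'_def by auto
    thus "d_coef (k - 1) - d_coef k \<le> d_coef (degree W E u - 1) - d_coef (degree W E u)"
      using dd_chain[OF d2] by simp
  qed
  have k2: "k \<ge> 2"
  proof -
    obtain u where "u \<in> N" using Nne by auto
    moreover have "degree W E u \<le> k" using calculation NW' vmax unfolding k_def W'_def by auto
    ultimately show ?thesis using deg2[of u] by linarith
  qed
  have "real k * (d_coef (k - 1) - d_coef k) \<le> (\<Sum>u\<in>N. d_coef (degree W E u - 1) - d_coef (degree W E u))"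
    using sum_mono[of N "\<lambda>u. d_coef (k - 1) - d_coef k", OF termb] cardN by simp
  hence "d_coef k \<le> fw W' - (fw W - d_coef k)" using dd_R5[OF k2] diff by linarith
  thus ?thesis unfolding W'_def by simp
qed

lemma main_lemma:
  assumes "finite W"
  shows "\<exists>S\<subseteq>W. (\<forall>x\<in>S. \<forall>y\<in>S. \<not> E x y) \<and> fw W \<le> real (card S)"
  using assms
proof (induction "card W" arbitrary: W rule: less_induct)
  case less
  note fin = less.prems
  show ?case
  proof (cases "W = {}")
    case True
    thus ?thesis unfolding fw_def by auto
  next
    case Wne: False
    show ?thesis
    proof (cases "\<exists>u\<in>W. (\<Sum>t\<in>cnb W u. gw W t) \<le> 1")
      case True
      then obtain u where u: "u \<in> W" "(\<Sum>t\<in>cnb W u. gw W t) \<le> 1" by auto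
      define X where "X = cnb W u"
      have XW: "X \<subseteq> W" unfolding X_def using cnb_sub[OF u(1)] .
      have uX: "u \<in> X" unfolding X_def cnb_def by simp
      have "W - X \<subset> W" using uX u(1) by blast
      hence lt: "card (W - X) < card W" using fin by (simp add: psubset_card_mono)
      obtain S' where S': "S' \<subseteq> W - X" "\<forall>x\<in>S'. \<forall>y\<in>S'. \<not> E x y" "fw (W - X) \<le> real (card S')"
        using less.hyps[OF lt] fin by auto
      define S where "S = insert u S'"
      have uS': "u \<notin> S'" using S'(1) uX by auto
      have noadj: "\<not> E u x" if "x \<in> S'" for x
      proof
        assume "E u x"
        hence "x \<in> X" using that S'(1) unfolding X_def cnb_def neighbours_def by auto
        thus False using that S'(1) by auto
      qed
      have indep: "\<forall>x\<in>S. \<forall>y\<in>S. \<not> E x y"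
      proof (intro ballI)
        fix x y assume "x \<in> S" "y \<in> S"
        thus "\<not> E x y" unfolding S_def using S'(2) noadj[of x] noadj[of y] irrE[of u] symE[of x y] by auto
      qed
      have finS': "finite S'" using finite_subset[OF S'(1)] fin by auto
      have cS: "card S = card S' + 1" unfolding S_def using uS' finS' by simp
      have "fw W = (\<Sum>t\<in>X. gw W t) + (\<Sum>t\<in>W - X. gw W t)"
        unfolding fw_def using sum.subset_diff[OF XW fin] by (simp add: add.commute)
      also have "\<dots> \<le> 1 + fw (W - X)"
        using u(2) lemma_M[OF fin XW] unfolding X_def by linarith
      also have "\<dots> \<le> real (card S)" using S'(3) cS by simp
      finally have fS: "fw W \<le> real (card S)" .
      have "S \<subseteq> W" unfolding S_def using S'(1) u(1) by blast
      thus ?thesis using indep fS by blast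
    next
      case False
      hence big: "\<forall>u\<in>W. (\<Sum>t\<in>cnb W u. gw W t) > 1" by auto
      obtain v where v: "v \<in> W" "\<forall>u\<in>W. degree W E u \<le> degree W E v"
      proof -
        have "finite (degree W E ` W)" using fin by simp
        hence "Max (degree W E ` W) \<in> degree W E ` W" using Wne by (simp add: Max_in)
        then obtain v where "v \<in> W" "degree W E v = Max (degree W E ` W)" by auto
        moreover have "\<forall>u\<in>W. degree W E u \<le> Max (degree W E ` W)" using fin by simp
        ultimately show ?thesis using that by auto
      qed
      have lt: "card (W - {v}) < card W" using card_Diff1_less[OF fin v(1)] .
      obtain S where S: "S \<subseteq> W - {v}" "\<forall>x\<in>S. \<forall>y\<in>S. \<not> E x y" "fw (W - {v}) \<le> real (card S)"
        using less.hyps[OF lt] fin by auto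
      have "fw W \<le> fw (W - {v})" using deletion_step[OF fin big v] .
      hence fS: "fw W \<le> real (card S)" using S(3) by linarith
      have "S \<subseteq> W" using S(1) by blast
      thus ?thesis using S(2) fS by blast
    qed
  qed
qed

end

theorem theorem5:
  fixes D :: nat and V :: "'a set" and E :: "'a \<Rightarrow> 'a \<Rightarrow> bool"
  assumes "D \<ge> 3"
    and "in_GD D V E"
  shows "real (independence_number V E)
           \<ge> (\<Sum>i = 1..D. d_coef i * real (card (vertices_of_degree V E i)))
         \<and> d_coef 1 = 1 - 1 / exp 1
         \<and> (\<forall>i\<in>{1..D - 1}. d_coef (i + 1) = 1 - real i * d_coef i)"
proof -
  have sg: "simple_graph V E" and conn: "connected_graph V E" and md: "max_degree_is V E D"
    and nc: "\<not> is_complete_graph V E (D + 1)"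
    using assms(2) unfolding in_GD_def by auto
  have finV: "finite V" and EV: "\<And>x y. E x y \<Longrightarrow> x \<in> V \<and> y \<in> V"
    and sym: "\<And>x y. E x y \<Longrightarrow> E y x" and irr: "\<And>x. \<not> E x x"
    using sg unfolding simple_graph_def by auto
  interpret gr E using sym irr by unfold_locales auto
  obtain S where S: "S \<subseteq> V" "\<forall>x\<in>S. \<forall>y\<in>S. \<not> E x y" "fw V \<le> real (card S)"
    using main_lemma[OF finV] by blast
  have ind: "independent_set V E S" unfolding independent_set_def using S by blast
  have finI: "finite {card S | S. independent_set V E S}"
  proof (rule finite_subset)
    show "{card S | S. independent_set V E S} \<subseteq> card ` Pow V"
      unfolding independent_set_def by auto
    show "finite (card ` Pow V)" using finV by simp
  qed
  have alpha: "card S \<le> independence_number V E"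
    unfolding independence_number_def using ind by (intro Max_ge[OF finI]) auto
  have noK: "\<not> isK V v" if v: "v \<in> V" for v
  proof
    assume K: "isK V v"
    have reach: "u \<in> cnb V v" if "(v, u) \<in> {(x, y). E x y}\<^sup>*" for u
      using that
    proof (induction rule: rtrancl_induct)
      case base show ?case unfolding cnb_def by simp
    next
      case (step y z)
      have Eyz: "E y z" using step.hyps(2) by simp
      have "cnb V y = cnb V v" using isK_cnb[OF K step.IH] by simp
      moreover have "z \<in> cnb V y" using Eyz EV[OF Eyz] unfolding cnb_def neighbours_def by simp
      ultimately show ?case by simp
    qed
    have Vc: "cnb V v = V"
    proof
      show "cnb V v \<subseteq> V" using cnb_sub[OF v] .
      show "V \<subseteq> cnb V v" using reach conn v unfolding connected_graph_def by blast
    qed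
    have clV: "clique V" using isK_clique[OF K] Vc by simp
    obtain w where w: "w \<in> V" "degree V E w = D" using md unfolding max_degree_is_def by auto
    have "cnb V w = V" using isK_cnb[OF K, of w] w(1) Vc by simp
    hence "card V = D + 1" using card_cnb[OF finV, of w] w(2) by simp
    hence "is_complete_graph V E (D + 1)"
      unfolding is_complete_graph_def using clV unfolding clique_def by blast
    thus False using nc by simp
  qed
  have fwV: "fw V = (\<Sum>v\<in>V. d_coef (degree V E v))"
    unfolding fw_def gw_def using noK by simp
  have degs: "degree V E ` V \<subseteq> {1..D}"
  proof
    fix i assume "i \<in> degree V E ` V"
    then obtain v where v: "v \<in> V" "i = degree V E v" by auto
    have "degree V E v \<ge> 1" using not_isK_deg[OF finV noK[OF v(1)]] .
    moreover have "degree V E v \<le> D" using md v(1) unfolding max_degree_is_def by auto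
    ultimately show "i \<in> {1..D}" using v(2) by simp
  qed
  have "(\<Sum>i = 1..D. d_coef i * real (card (vertices_of_degree V E i)))
      = (\<Sum>i = 1..D. (\<Sum>v\<in>{x. x \<in> V \<and> degree V E x = i}. d_coef (degree V E v)))"
  proof (rule sum.cong[OF refl])
    fix i
    have "(\<Sum>v\<in>{x. x \<in> V \<and> degree V E x = i}. d_coef (degree V E v))
        = (\<Sum>v\<in>{x. x \<in> V \<and> degree V E x = i}. d_coef i)" by (rule sum.cong) auto
    thus "d_coef i * real (card (vertices_of_degree V E i))
        = (\<Sum>v\<in>{x. x \<in> V \<and> degree V E x = i}. d_coef (degree V E v))"
      unfolding vertices_of_degree_def by (simp add: mult.commute)
  qed
  also have "\<dots> = (\<Sum>v\<in>V. d_coef (degree V E v))"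
    by (rule sum.group[OF finV _ degs]) simp
  finally have main: "(\<Sum>i = 1..D. d_coef i * real (card (vertices_of_degree V E i))) \<le> real (independence_number V E)"
    using fwV S(3) alpha by simp
  show ?thesis using main dd_1 dd_rec by auto
qed

end
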